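(* Let $\kappa_{\mathrm{even}}$ denote the growth rate of the even model and $\kappa_{p\text{-}i}$ the growth rate of the $p$-$i$ model on the square lattice, as defined in the context. Then $\kappa_{\mathrm{even}}=\kappa_{p\text{-}i}$.
   Context: Work on the finite square lattice $[1,N]^2\subset\mathbb{Z}^2$, whose $N^2$ vertices carry spins $\oplus$ or $\ominus$. A spin configuration satisfies the even constraint if for any two $\ominus$ spins lying on a common horizontal or vertical line with no other $\ominus$ spin between them, the number of $\oplus$ spins between them is even. Let $Z^{\mathrm{even}}_N$ be the number of such configurations on $[1,N]^2$. The $p$-$i$ model places states on the bonds of $[1,N]^2$, including boundary bonds (so every vertex has four incident bonds), each state being $p$ or $i$. A labelling is valid if at every vertex: the number of incident bonds labelled $i$ is $0$ or $2$, and the two horizontal incident bonds are not both $i$, and the two vertical incident bonds are not both $i$ (i.e. no two adjacent $i$ states along any horizontal or vertical line). Let $Z^{p\text{-}i}_N$ be the number of valid labellings. (Intuitively, a bond's state records the parity, $p$ = even, $i$ = odd, of the number of $\oplus$ spins between it and the nearest $\ominus$ to its west/north.) The growth rate of a model is $\kappa=\lim_{N\to\infty} Z_N^{1/N^2}$ (these limits are taken to exist). *)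

theory Defs
  imports Complex_Main
begin

text \<open>Vertices of the lattice [1,N]^2 are pairs (i,j) with 1 \<le> i,j \<le> N;
  i indexes the row (horizontal line), j the column (vertical line).\<close>

definition grid :: "nat \<Rightarrow> (nat \<times> nat) set" where
  "grid N = {1..N} \<times> {1..N}"

text \<open>A spin configuration is given by the set S of vertices carrying a minus spin;
  all other vertices of the grid carry a plus spin.\<close>

definition even_constraint :: "nat \<Rightarrow> (nat \<times> nat) set \<Rightarrow> bool" where
  "even_constraint N S \<longleftrightarrow>
     (\<forall>i j j'. (i, j) \<in> S \<and> (i, j') \<in> S \<and> j < j' \<and>
         (\<forall>k. j < k \<and> k < j' \<longrightarrow> (i, k) \<notin> S)
       \<longrightarrow> even (card {k. j < k \<and> k < j' \<and> (i, k) \<in> grid N \<and> (i, k) \<notin> S})) \<and>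
     (\<forall>j i i'. (i, j) \<in> S \<and> (i', j) \<in> S \<and> i < i' \<and>
         (\<forall>k. i < k \<and> k < i' \<longrightarrow> (k, j) \<notin> S)
       \<longrightarrow> even (card {k. i < k \<and> k < i' \<and> (k, j) \<in> grid N \<and> (k, j) \<notin> S}))"

definition Z_even :: "nat \<Rightarrow> nat" where
  "Z_even N = card {S. S \<subseteq> grid N \<and> even_constraint N S}"

text \<open>Horizontal bond (i,j), 1 \<le> i \<le> N, 0 \<le> j \<le> N, joins (i,j) and (i,j+1)
  (boundary bonds for j = 0 and j = N); vertex (i,j) has west bond (i,j-1) and east bond (i,j).
  Vertical bond (i,j), 0 \<le> i \<le> N, 1 \<le> j \<le> N, joins (i,j) and (i+1,j);
  vertex (i,j) has north bond (i-1,j) and south bond (i,j).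
  A labelling is given by the sets H, V of horizontal / vertical bonds in state i.\<close>

definition hbonds :: "nat \<Rightarrow> (nat \<times> nat) set" where
  "hbonds N = {1..N} \<times> {0..N}"

definition vbonds :: "nat \<Rightarrow> (nat \<times> nat) set" where
  "vbonds N = {0..N} \<times> {1..N}"

definition pi_valid :: "nat \<Rightarrow> (nat \<times> nat) set \<Rightarrow> (nat \<times> nat) set \<Rightarrow> bool" where
  "pi_valid N H V \<longleftrightarrow>
     (\<forall>i j. (i, j) \<in> grid N \<longrightarrow>
        (let w = (i, j - 1) \<in> H; e = (i, j) \<in> H;
             n = (i - 1, j) \<in> V; s = (i, j) \<in> V;
             c = card ({b. b = 0 \<and> w} \<union> {b. b = 1 \<and> e} \<union> {b. b = 2 \<and> n} \<union> {b. b = (3::nat) \<and> s})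
         in (c = 0 \<or> c = 2) \<and> \<not> (w \<and> e) \<and> \<not> (n \<and> s)))"

definition Z_pi :: "nat \<Rightarrow> nat" where
  "Z_pi N = card {(H, V). H \<subseteq> hbonds N \<and> V \<subseteq> vbonds N \<and> pi_valid N H V}"

definition growth_seq :: "(nat \<Rightarrow> nat) \<Rightarrow> nat \<Rightarrow> real" where
  "growth_seq Z N = real (Z N) powr (1 / real (N ^ 2))"

end

theory Submission
  imports Defs
begin

lemma card4: "card ({b. b = 0 \<and> w} \<union> {b. b = 1 \<and> e} \<union> {b. b = 2 \<and> n} \<union> {b. b = (3::nat) \<and> s})
   = of_bool w + of_bool e + of_bool n + of_bool s"
  by (cases w; cases e; cases n; cases s) (auto simp: Collect_conv_if insert_commute card_insert_if)

definition loc :: "bool \<Rightarrow> bool \<Rightarrow> bool \<Rightarrow> bool \<Rightarrow> bool" where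
  "loc w e n s \<longleftrightarrow> (\<not>w \<and> \<not>e \<and> \<not>n \<and> \<not>s) \<or> (w \<noteq> e \<and> n \<noteq> s)"

lemma pi_valid_iff: "pi_valid N H V \<longleftrightarrow> (\<forall>i j. (i, j) \<in> grid N \<longrightarrow>
   loc ((i, j - 1) \<in> H) ((i, j) \<in> H) ((i - 1, j) \<in> V) ((i, j) \<in> V))"
proof -
  have "\<And>w e n s. (let c = of_bool w + of_bool e + of_bool n + (of_bool s::nat) in
     (c = 0 \<or> c = 2) \<and> \<not> (w \<and> e) \<and> \<not> (n \<and> s)) = loc w e n s"
    by (auto simp: loc_def of_bool_def Let_def split: if_splits)
  then show ?thesis unfolding pi_valid_def card4 Let_def by simp
qed

fun rbits :: "(nat \<Rightarrow> bool) \<Rightarrow> bool \<Rightarrow> nat \<Rightarrow> bool" where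
  "rbits P b 0 = b"
| "rbits P b (Suc j) = (if P (Suc j) then False else \<not> rbits P b j)"

definition start :: "nat \<Rightarrow> (nat \<Rightarrow> bool) \<Rightarrow> bool" where
  "start N P = (if \<exists>k. 1 \<le> k \<and> k \<le> N \<and> P k then odd ((LEAST k. 1 \<le> k \<and> P k) - 1) else False)"

lemma rbits_run:
  assumes "j + m < j'" "\<forall>k. j < k \<and> k < j' \<longrightarrow> \<not> P k"
  shows "rbits P b (j + m) = (rbits P b j \<noteq> odd m)"
  using assms(1)
proof (induction m)
  case 0 then show ?case by simp
next
  case (Suc m)
  have "\<not> P (Suc (j + m))" using assms(2) Suc.prems by auto
  then show ?case using Suc by simp
qed

lemma rbits_minus:
  assumes gap: "\<forall>j j'. 1 \<le> j \<longrightarrow> j' \<le> N \<longrightarrow> P j \<longrightarrow> P j' \<longrightarrow> j < j' \<longrightarrow>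
      (\<forall>k. j < k \<and> k < j' \<longrightarrow> \<not> P k) \<longrightarrow> even (j' - j - 1)"
    and j: "1 \<le> j" "j \<le> N" "P j"
  shows "\<not> rbits P (start N P) (j - 1)"
proof (cases "\<exists>k. 1 \<le> k \<and> k < j \<and> P k")
  case True
  define A where "A = {k. 1 \<le> k \<and> k < j \<and> P k}"
  have fin: "finite A" unfolding A_def by auto
  have ne: "A \<noteq> {}" using True unfolding A_def by auto
  define a where "a = Max A"
  have aA: "a \<in> A" unfolding a_def using fin ne by simp
  have amax: "\<And>k. k \<in> A \<Longrightarrow> k \<le> a" unfolding a_def using fin by simp
  have a1: "1 \<le> a" "a < j" "P a" using aA unfolding A_def by auto
  have between: "\<forall>k. a < k \<and> k < j \<longrightarrow> \<not> P k"
  proof (intro allI impI)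
    fix k assume k: "a < k \<and> k < j"
    show "\<not> P k"
    proof
      assume "P k"
      then have "k \<in> A" using k a1 unfolding A_def by auto
      then show False using amax k by force
    qed
  qed
  have ra: "\<not> rbits P (start N P) a"
    using a1 by (cases a) auto
  have "rbits P (start N P) (a + (j - 1 - a)) = (rbits P (start N P) a \<noteq> odd (j - 1 - a))"
    by (rule rbits_run) (use a1 between in auto)
  moreover have "even (j - a - 1)"
    using gap a1 j between by blast
  moreover have "a + (j - 1 - a) = j - 1" using a1 by simp
  ultimately show ?thesis using ra by (simp add: algebra_simps)
next
  case False
  have ex: "\<exists>k. 1 \<le> k \<and> k \<le> N \<and> P k" using j by auto
  have lj: "(LEAST k. 1 \<le> k \<and> P k) = j"
    by (rule Least_equality) (use j False in \<open>auto simp: not_less[symmetric]\<close>)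
  have st: "start N P = odd (j - 1)" unfolding start_def using ex lj by simp
  have "rbits P (start N P) (0 + (j - 1)) = (rbits P (start N P) 0 \<noteq> odd (j - 1))"
    by (rule rbits_run) (use j False in auto)
  then show ?thesis using st by simp
qed

lemma alt_even:
  fixes j j' :: nat
  assumes "\<not> b j" "\<not> b (j' - 1)" "j < j'" "\<forall>k. j < k \<and> k < j' \<longrightarrow> b k = (\<not> b (k - 1))"
  shows "even (j' - j - 1)"
proof -
  have *: "j + m < j' \<Longrightarrow> b (j + m) = odd m" for m :: nat
  proof (induct m)
    case 0 then show ?case using assms by simp
  next
    case (Suc m)
    then show ?case using assms(4)[rule_format, of "j + Suc m"] by auto
  qed
  have "b (j + (j' - j - 1)) = odd (j' - j - 1)" by (rule *) (use assms in auto)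
  moreover have "j + (j' - j - 1) = j' - 1" using assms by simp
  ultimately show ?thesis using assms by simp
qed

definition Sof :: "nat \<Rightarrow> (nat \<times> nat) set \<Rightarrow> (nat \<times> nat) set" where
  "Sof N H = {(i, j) \<in> grid N. (i, j) \<notin> H \<and> (i, j - 1) \<notin> H}"

lemma locv: "pi_valid N H V \<Longrightarrow> (i, j) \<in> grid N \<Longrightarrow>
   loc ((i, j - 1) \<in> H) ((i, j) \<in> H) ((i - 1, j) \<in> V) ((i, j) \<in> V)"
  using pi_valid_iff by blast

lemma Sof_V: "pi_valid N H V \<Longrightarrow> (i, j) \<in> grid N \<Longrightarrow>
   (i, j) \<in> Sof N H \<longleftrightarrow> (i, j) \<notin> V \<and> (i - 1, j) \<notin> V"
  using locv[of N H V i j] unfolding Sof_def loc_def by auto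

lemma Sof_not: "pi_valid N H V \<Longrightarrow> (i, j) \<in> grid N \<Longrightarrow> (i, j) \<notin> Sof N H \<Longrightarrow>
   ((i, j) \<in> H) = (\<not> (i, j - 1) \<in> H) \<and> ((i, j) \<in> V) = (\<not> (i - 1, j) \<in> V)"
  using locv[of N H V i j] Sof_V[of N H V i j] unfolding Sof_def loc_def by auto

lemma grid_iff: "(i, j) \<in> grid N \<longleftrightarrow> 1 \<le> i \<and> i \<le> N \<and> 1 \<le> j \<and> j \<le> N"
  unfolding grid_def by auto

lemma card_between:
  assumes "\<And>k. j < k \<Longrightarrow> k < j' \<Longrightarrow> Q k"
  shows "card {k. j < k \<and> k < j' \<and> Q k} = j' - j - 1"
proof -
  have "{k. j < k \<and> k < j' \<and> Q k} = {j<..<j'}" using assms by auto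
  then show ?thesis by simp
qed

lemma Sof_even:
  assumes v: "pi_valid N H V"
  shows "even_constraint N (Sof N H)"
  unfolding even_constraint_def
proof (intro conjI allI impI)
  fix i j j'
  assume a: "(i, j) \<in> Sof N H \<and> (i, j') \<in> Sof N H \<and> j < j' \<and> (\<forall>k. j < k \<and> k < j' \<longrightarrow> (i, k) \<notin> Sof N H)"
  have g: "1 \<le> i" "i \<le> N" "1 \<le> j" "j' \<le> N" using a unfolding Sof_def grid_iff by auto
  have c: "card {k. j < k \<and> k < j' \<and> (i, k) \<in> grid N \<and> (i, k) \<notin> Sof N H} = j' - j - 1"
    by (rule card_between) (use a g in \<open>auto simp: grid_iff\<close>)
  have "even (j' - j - 1)"
  proof (rule alt_even[where b = "\<lambda>k. (i, k) \<in> H"])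
    show "\<not> (i, j) \<in> H" "\<not> (i, j' - 1) \<in> H" using a unfolding Sof_def by auto
    show "j < j'" using a by auto
    show "\<forall>k. j < k \<and> k < j' \<longrightarrow> ((i, k) \<in> H) = (\<not> (i, k - 1) \<in> H)"
      using Sof_not[OF v] a g by (auto simp: grid_iff)
  qed
  then show "even (card {k. j < k \<and> k < j' \<and> (i, k) \<in> grid N \<and> (i, k) \<notin> Sof N H})"
    using c by simp
next
  fix j i i'
  assume a: "(i, j) \<in> Sof N H \<and> (i', j) \<in> Sof N H \<and> i < i' \<and> (\<forall>k. i < k \<and> k < i' \<longrightarrow> (k, j) \<notin> Sof N H)"
  have g: "1 \<le> j" "j \<le> N" "1 \<le> i" "i' \<le> N" "(i, j) \<in> grid N" "(i', j) \<in> grid N"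
    using a unfolding Sof_def grid_iff by auto
  have c: "card {k. i < k \<and> k < i' \<and> (k, j) \<in> grid N \<and> (k, j) \<notin> Sof N H} = i' - i - 1"
    by (rule card_between) (use a g in \<open>auto simp: grid_iff\<close>)
  have "even (i' - i - 1)"
  proof (rule alt_even[where b = "\<lambda>k. (k, j) \<in> V"])
    show "\<not> (i, j) \<in> V" "\<not> (i' - 1, j) \<in> V" using a g Sof_V[OF v] by auto
    show "i < i'" using a by auto
    show "\<forall>k. i < k \<and> k < i' \<longrightarrow> ((k, j) \<in> V) = (\<not> (k - 1, j) \<in> V)"
      using Sof_not[OF v] a g by (auto simp: grid_iff)
  qed
  then show "even (card {k. i < k \<and> k < i' \<and> (k, j) \<in> grid N \<and> (k, j) \<notin> Sof N H})"
    using c by simp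
qed

lemma rows_det:
  assumes v: "pi_valid N H V" and i: "1 \<le> i" "i \<le> N"
  shows "j \<le> N \<Longrightarrow> ((i, j) \<in> H) = rbits (\<lambda>k. (i, k) \<in> Sof N H) ((i, 0) \<in> H) j"
proof (induct j)
  case 0 then show ?case by simp
next
  case (Suc j)
  have g: "(i, Suc j) \<in> grid N" using i Suc.prems by (simp add: grid_iff)
  show ?case
  proof (cases "(i, Suc j) \<in> Sof N H")
    case True then show ?thesis unfolding Sof_def by auto
  next
    case False then show ?thesis using Sof_not[OF v g] Suc by auto
  qed
qed

lemma cols_det:
  assumes v: "pi_valid N H V" and j: "1 \<le> j" "j \<le> N"
  shows "i \<le> N \<Longrightarrow> ((i, j) \<in> V) = rbits (\<lambda>k. (k, j) \<in> Sof N H) ((0, j) \<in> V) i"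
proof (induct i)
  case 0 then show ?case by simp
next
  case (Suc i)
  have g: "(Suc i, j) \<in> grid N" using j Suc.prems by (simp add: grid_iff)
  show ?case
  proof (cases "(Suc i, j) \<in> Sof N H")
    case True then show ?thesis using Sof_V[OF v g] by auto
  next
    case False then show ?thesis using Sof_not[OF v g] Suc by auto
  qed
qed

lemma hb_iff: "(i, j) \<in> hbonds N \<longleftrightarrow> 1 \<le> i \<and> i \<le> N \<and> j \<le> N"
  unfolding hbonds_def by auto
lemma vb_iff: "(i, j) \<in> vbonds N \<longleftrightarrow> 1 \<le> j \<and> j \<le> N \<and> i \<le> N"
  unfolding vbonds_def by auto

lemma upper: "Z_pi N \<le> Z_even N * 2 ^ N * 2 ^ N"
proof -
  define PI where "PI = {(H, V). H \<subseteq> hbonds N \<and> V \<subseteq> vbonds N \<and> pi_valid N H V}"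
  define EV where "EV = {S. S \<subseteq> grid N \<and> even_constraint N S}"
  define F where "F = (\<lambda>(H :: (nat \<times> nat) set, V :: (nat \<times> nat) set). (Sof N H, {i \<in> {1..N}. (i, 0) \<in> H}, {j \<in> {1..N}. (0, j) \<in> V}))"
  have inj: "inj_on F PI"
  proof (rule inj_onI)
    fix x y assume x: "x \<in> PI" and y: "y \<in> PI" and e: "F x = F y"
    obtain H V where xx: "x = (H, V)" by (cases x)
    obtain H' V' where yy: "y = (H', V')" by (cases y)
    have hx: "H \<subseteq> hbonds N" "V \<subseteq> vbonds N" "pi_valid N H V" using x unfolding xx PI_def by simp_all
    have hy: "H' \<subseteq> hbonds N" "V' \<subseteq> vbonds N" "pi_valid N H' V'" using y unfolding yy PI_def by simp_all
    have eS: "Sof N H = Sof N H'" and e1: "{i \<in> {1..N}. (i, 0) \<in> H} = {i \<in> {1..N}. (i, 0) \<in> H'}"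
      and e2: "{j \<in> {1..N}. (0, j) \<in> V} = {j \<in> {1..N}. (0, j) \<in> V'}"
      using e unfolding xx yy F_def by simp_all
    have "H = H'"
    proof (rule set_eqI)
      fix p :: "nat \<times> nat"
      obtain i j where p: "p = (i, j)" by (cases p)
      show "p \<in> H \<longleftrightarrow> p \<in> H'"
      proof (cases "p \<in> hbonds N")
        case True
        then have ij: "1 \<le> i" "i \<le> N" "j \<le> N" using p hb_iff by auto
        have "i \<in> {i \<in> {1..N}. (i, 0) \<in> H} \<longleftrightarrow> i \<in> {i \<in> {1..N}. (i, 0) \<in> H'}" by (simp only: e1)
        then have b: "((i, 0) \<in> H) = ((i, 0) \<in> H')" using ij by simp
        show ?thesis unfolding p rows_det[OF hx(3) ij(1,2) ij(3)] rows_det[OF hy(3) ij(1,2) ij(3)] eS b ..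
      next
        case False then show ?thesis using hx(1,2) hy(1,2) by blast
      qed
    qed
    moreover have "V = V'"
    proof (rule set_eqI)
      fix p :: "nat \<times> nat"
      obtain i j where p: "p = (i, j)" by (cases p)
      show "p \<in> V \<longleftrightarrow> p \<in> V'"
      proof (cases "p \<in> vbonds N")
        case True
        then have ij: "1 \<le> j" "j \<le> N" "i \<le> N" using p vb_iff by auto
        have "j \<in> {j \<in> {1..N}. (0, j) \<in> V} \<longleftrightarrow> j \<in> {j \<in> {1..N}. (0, j) \<in> V'}" by (simp only: e2)
        then have b: "((0, j) \<in> V) = ((0, j) \<in> V')" using ij by simp
        show ?thesis unfolding p cols_det[OF hx(3) ij(1,2) ij(3)] cols_det[OF hy(3) ij(1,2) ij(3)] eS b ..
      next
        case False then show ?thesis using hx(1,2) hy(1,2) by blast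
      qed
    qed
    ultimately show "x = y" using xx yy by simp
  qed
  have sub: "F ` PI \<subseteq> EV \<times> Pow {1..N} \<times> Pow {1..N}"
  proof
    fix z assume "z \<in> F ` PI"
    then obtain H V where hv: "(H, V) \<in> PI" "z = F (H, V)" by auto
    have v: "pi_valid N H V" using hv(1) unfolding PI_def by simp
    have "Sof N H \<subseteq> grid N" unfolding Sof_def by auto
    then have "Sof N H \<in> EV" using Sof_even[OF v] unfolding EV_def by simp
    then show "z \<in> EV \<times> Pow {1..N} \<times> Pow {1..N}" using hv F_def by auto
  qed
  have finEV: "finite EV" unfolding EV_def grid_def
    by (rule finite_subset[of _ "Pow ({1..N} \<times> {1..N})"]) auto
  have "card PI \<le> card (EV \<times> Pow {1..N} \<times> Pow {1..N})"
    by (rule card_inj_on_le[OF inj sub]) (use finEV in simp)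
  also have "\<dots> = card EV * 2 ^ N * 2 ^ N" by (simp add: card_cartesian_product card_Pow)
  finally show ?thesis unfolding Z_pi_def Z_even_def PI_def EV_def by simp
qed

definition Hs :: "nat \<Rightarrow> (nat \<times> nat) set \<Rightarrow> (nat \<times> nat) set" where
  "Hs N S = {(i, j) \<in> hbonds N. rbits (\<lambda>k. (i, k) \<in> S) (start N (\<lambda>k. (i, k) \<in> S)) j}"
definition Vs :: "nat \<Rightarrow> (nat \<times> nat) set \<Rightarrow> (nat \<times> nat) set" where
  "Vs N S = {(i, j) \<in> vbonds N. rbits (\<lambda>k. (k, j) \<in> S) (start N (\<lambda>k. (k, j) \<in> S)) i}"

lemma row_gap:
  assumes S: "S \<subseteq> grid N" "even_constraint N S"
  shows "\<forall>j j'. 1 \<le> j \<longrightarrow> j' \<le> N \<longrightarrow> (i, j) \<in> S \<longrightarrow> (i, j') \<in> S \<longrightarrow> j < j' \<longrightarrow>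
      (\<forall>k. j < k \<and> k < j' \<longrightarrow> \<not> (i, k) \<in> S) \<longrightarrow> even (j' - j - 1)"
proof (intro allI impI)
  fix j j' assume a: "1 \<le> j" "j' \<le> N" "(i, j) \<in> S" "(i, j') \<in> S" "j < j'"
    "\<forall>k. j < k \<and> k < j' \<longrightarrow> \<not> (i, k) \<in> S"
  have i: "1 \<le> i" "i \<le> N" using a(3) S(1) by (auto simp: grid_iff)
  have "even (card {k. j < k \<and> k < j' \<and> (i, k) \<in> grid N \<and> (i, k) \<notin> S})"
    using S(2) a unfolding even_constraint_def by blast
  moreover have "card {k. j < k \<and> k < j' \<and> (i, k) \<in> grid N \<and> (i, k) \<notin> S} = j' - j - 1"
    by (rule card_between) (use a i in \<open>auto simp: grid_iff\<close>)
  ultimately show "even (j' - j - 1)" by simp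
qed

lemma col_gap:
  assumes S: "S \<subseteq> grid N" "even_constraint N S"
  shows "\<forall>i i'. 1 \<le> i \<longrightarrow> i' \<le> N \<longrightarrow> (i, j) \<in> S \<longrightarrow> (i', j) \<in> S \<longrightarrow> i < i' \<longrightarrow>
      (\<forall>k. i < k \<and> k < i' \<longrightarrow> \<not> (k, j) \<in> S) \<longrightarrow> even (i' - i - 1)"
proof (intro allI impI)
  fix i i' assume a: "1 \<le> i" "i' \<le> N" "(i, j) \<in> S" "(i', j) \<in> S" "i < i'"
    "\<forall>k. i < k \<and> k < i' \<longrightarrow> \<not> (k, j) \<in> S"
  have j: "1 \<le> j" "j \<le> N" using a(3) S(1) by (auto simp: grid_iff)
  have "even (card {k. i < k \<and> k < i' \<and> (k, j) \<in> grid N \<and> (k, j) \<notin> S})"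
    using S(2) a unfolding even_constraint_def by blast
  moreover have "card {k. i < k \<and> k < i' \<and> (k, j) \<in> grid N \<and> (k, j) \<notin> S} = i' - i - 1"
    by (rule card_between) (use a j in \<open>auto simp: grid_iff\<close>)
  ultimately show "even (i' - i - 1)" by simp
qed

lemma local_facts:
  assumes S: "S \<subseteq> grid N" "even_constraint N S" and g: "(i, j) \<in> grid N"
  defines "R \<equiv> rbits (\<lambda>k. (i, k) \<in> S) (start N (\<lambda>k. (i, k) \<in> S))"
      and "C \<equiv> rbits (\<lambda>k. (k, j) \<in> S) (start N (\<lambda>k. (k, j) \<in> S))"
  shows "((i, j - 1) \<in> Hs N S) = R (j - 1)" "((i, j) \<in> Hs N S) = R j"
    "((i - 1, j) \<in> Vs N S) = C (i - 1)" "((i, j) \<in> Vs N S) = C i"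
    "(i, j) \<in> S \<Longrightarrow> \<not> R (j - 1) \<and> \<not> R j \<and> \<not> C (i - 1) \<and> \<not> C i"
    "(i, j) \<notin> S \<Longrightarrow> R j = (\<not> R (j - 1)) \<and> C i = (\<not> C (i - 1))"
proof -
  have gi: "1 \<le> i" "i \<le> N" "1 \<le> j" "j \<le> N" using g by (auto simp: grid_iff)
  show "((i, j - 1) \<in> Hs N S) = R (j - 1)" "((i, j) \<in> Hs N S) = R j"
    "((i - 1, j) \<in> Vs N S) = C (i - 1)" "((i, j) \<in> Vs N S) = C i"
    using gi unfolding Hs_def Vs_def R_def C_def by (auto simp: hb_iff vb_iff)
  have js: "j = Suc (j - 1)" "i = Suc (i - 1)" using gi by auto
  have "R (Suc (j - 1)) = (if (i, Suc (j - 1)) \<in> S then False else \<not> R (j - 1))"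
    unfolding R_def by simp
  then have rj: "R j = (if (i, j) \<in> S then False else \<not> R (j - 1))"
    unfolding js(1)[symmetric] .
  have "C (Suc (i - 1)) = (if (Suc (i - 1), j) \<in> S then False else \<not> C (i - 1))"
    unfolding C_def by simp
  then have ci: "C i = (if (i, j) \<in> S then False else \<not> C (i - 1))"
    unfolding js(2)[symmetric] .
  show "(i, j) \<in> S \<Longrightarrow> \<not> R (j - 1) \<and> \<not> R j \<and> \<not> C (i - 1) \<and> \<not> C i"
  proof -
    assume m: "(i, j) \<in> S"
    have 1: "\<not> R (j - 1)" unfolding R_def
      by (rule rbits_minus[OF row_gap[OF S]]) (use gi m in auto)
    have 2: "\<not> C (i - 1)" unfolding C_def
      by (rule rbits_minus[OF col_gap[OF S]]) (use gi m in auto)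
    have 3: "\<not> R j" using rj m by simp
    have 4: "\<not> C i" using ci m by simp
    show ?thesis using 1 2 3 4 by simp
  qed
  show "(i, j) \<notin> S \<Longrightarrow> R j = (\<not> R (j - 1)) \<and> C i = (\<not> C (i - 1))"
  proof -
    assume m: "(i, j) \<notin> S"
    have 3: "R j = (\<not> R (j - 1))" using rj m by simp
    have 4: "C i = (\<not> C (i - 1))" using ci m by simp
    show ?thesis using 3 4 by simp
  qed
qed

lemma lower: "Z_even N \<le> Z_pi N"
proof -
  define PI where "PI = {(H, V). H \<subseteq> hbonds N \<and> V \<subseteq> vbonds N \<and> pi_valid N H V}"
  define EV where "EV = {S. S \<subseteq> grid N \<and> even_constraint N S}"
  define G where "G = (\<lambda>S. (Hs N S, Vs N S))"
  have rec: "Sof N (Hs N S) = S" if S: "S \<in> EV" for S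
  proof -
    have S': "S \<subseteq> grid N" "even_constraint N S" using S EV_def by auto
    show ?thesis
    proof (rule set_eqI)
      fix p :: "nat \<times> nat"
      obtain i j where p: "p = (i, j)" by (cases p)
      show "p \<in> Sof N (Hs N S) \<longleftrightarrow> p \<in> S"
      proof (cases "(i, j) \<in> grid N")
        case True
        note L = local_facts[OF S'(1,2) True]
        show ?thesis unfolding p Sof_def using L True by auto
      next
        case False then show ?thesis using S' unfolding p Sof_def by auto
      qed
    qed
  qed
  have inj: "inj_on G EV"
  proof (rule inj_onI)
    fix S S' assume "S \<in> EV" "S' \<in> EV" "G S = G S'"
    then show "S = S'" using rec unfolding G_def by (metis prod.inject)
  qed
  have sub: "G ` EV \<subseteq> PI"
  proof
    fix z assume "z \<in> G ` EV"
    then obtain S where S: "S \<in> EV" "z = G S" by auto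
    have S': "S \<subseteq> grid N" "even_constraint N S" using S EV_def by auto
    have "pi_valid N (Hs N S) (Vs N S)"
      unfolding pi_valid_iff
    proof (intro allI impI)
      fix i j assume g: "(i, j) \<in> grid N"
      note L = local_facts[OF S'(1,2) g]
      show "loc ((i, j - 1) \<in> Hs N S) ((i, j) \<in> Hs N S) ((i - 1, j) \<in> Vs N S) ((i, j) \<in> Vs N S)"
        unfolding L(1-4) loc_def using L(5,6) by (cases "(i, j) \<in> S") auto
    qed
    moreover have "Hs N S \<subseteq> hbonds N" "Vs N S \<subseteq> vbonds N" unfolding Hs_def Vs_def by auto
    ultimately show "z \<in> PI" using S unfolding PI_def G_def by simp
  qed
  have finPI: "finite PI" unfolding PI_def
    by (rule finite_subset[of _ "Pow (hbonds N) \<times> Pow (vbonds N)"])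
       (auto simp: hbonds_def vbonds_def)
  have "card EV \<le> card PI" by (rule card_inj_on_le[OF inj sub finPI])
  then show ?thesis unfolding Z_pi_def Z_even_def PI_def EV_def by simp
qed

lemma four_lim: "(\<lambda>n. (4::real) powr (1 / real n)) \<longlonglongrightarrow> 1"
proof -
  have "(\<lambda>n. 1 / real n) \<longlonglongrightarrow> 0" by (rule lim_const_over_n)
  then have "(\<lambda>n. (4::real) powr (1 / real n)) \<longlonglongrightarrow> 4 powr 0"
    by (intro tendsto_powr) auto
  then show ?thesis by simp
qed

lemma bound1: "growth_seq Z_even n \<le> growth_seq Z_pi n"
  unfolding growth_seq_def using lower[of n] by (intro powr_mono2) auto

lemma bound2: assumes "n \<ge> 1"
  shows "growth_seq Z_pi n \<le> 4 powr (1 / real n) * growth_seq Z_even n"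
proof -
  have "real (Z_pi n) \<le> real (Z_even n) * 4 ^ n"
  proof -
    have "Z_pi n \<le> Z_even n * 4 ^ n"
      using upper[of n] by (simp add: power_mult_distrib[symmetric] mult.assoc)
    then have "real (Z_pi n) \<le> real (Z_even n * 4 ^ n)" by (simp only: of_nat_le_iff)
    then show ?thesis by simp
  qed
  then have "growth_seq Z_pi n \<le> (real (Z_even n) * 4 ^ n) powr (1 / real (n ^ 2))"
    unfolding growth_seq_def by (intro powr_mono2) auto
  also have "\<dots> = real (Z_even n) powr (1 / real (n ^ 2)) * ((4::real) ^ n) powr (1 / real (n ^ 2))"
    by (rule powr_mult)
  also have "((4::real) ^ n) powr (1 / real (n ^ 2)) = 4 powr (real n * (1 / real (n ^ 2)))"
    by (simp add: powr_realpow[symmetric] powr_powr)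
  also have "real n * (1 / real (n ^ 2)) = 1 / real n"
    using assms by (simp add: power2_eq_square)
  finally show ?thesis unfolding growth_seq_def by (simp add: mult.commute)
qed

theorem mainTheorem2:
  fixes kappa_even kappa_pi :: real
  assumes "growth_seq Z_even \<longlonglongrightarrow> kappa_even"
      and "growth_seq Z_pi \<longlonglongrightarrow> kappa_pi"
  shows "kappa_even = kappa_pi"
proof -
  have "kappa_even \<le> kappa_pi"
    by (rule LIMSEQ_le[OF assms]) (use bound1 in auto)
  moreover have "kappa_pi \<le> 1 * kappa_even"
    by (rule LIMSEQ_le[OF assms(2) tendsto_mult[OF four_lim assms(1)]])
       (use bound2 in auto)
  ultimately show ?thesis by simp
qed

end
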